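(* Let $\mathbb{F}$ be an infinite field, $n\ge1$, and for $i=1,\dots,n$ let $m_i\ge 2$ and $L_i\ge1$ be integers. Put $R_i=\frac{m_i^{L_i}-1}{m_i-1}$, $D_i=\prod_{k=1}^{i-1}R_k$ (so $D_1=1$), $K_0=\prod_{i=1}^nR_i$, $N=\prod_{i=1}^nL_i$, and $e_i(s)=\frac{m_i^{s-1}-1}{m_i-1}=1+m_i+\dots+m_i^{s-2}$ for $s=1,\dots,L_i$ (with $e_i(1)=0$). In the sliced-contraction setting described in the context, define for $x\in\mathbb{F}$ the encoded tensors $$\tilde A^{(i,j)}(x)=\sum_{s=1}^{L_i}A^{(i,j)}_{s}\,x^{D_i\,e_i(s)}\qquad (j=1,\dots,m_i),$$ and $g(x)=\Phi\big(\tilde A^{(1,1)}(x),\dots,\tilde A^{(1,m_1)}(x),\dots,\tilde A^{(n,1)}(x),\dots,\tilde A^{(n,m_n)}(x)\big)$. Then $g$ is a polynomial in $x$ with coefficients in $W$ of degree at most $K_0-1$, and for each $(s_1,\dots,s_n)$ the coefficient of $x^{\sum_i D_i m_i e_i(s_i)}$ in $g$ equals the sliced partition $\sigma_{s_1\cdots s_n}$ (these $N$ exponents are pairwise distinct, and no other product of slices contributes to them). Consequently, for every integer $f\ge0$, the scheme with $K=f+K_0$ workers, worker $k$ computing $g(x_k)$ for pairwise distinct $x_1,\dots,x_K\in\mathbb{F}$, allows the master to recover every $\sigma_{s_1\cdots s_n}$ and hence $\sigma_{\mathrm{final}}$ from the outputs of any $K_0$ workers. Hence the $f$-resilient number $f+\prod_{i=1}^n\frac{m_i^{L_i}-1}{m_i-1}$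 is achievable, with gain compared to naive replication $$\Delta=\Big(\prod_{i=1}^nL_i-1\Big)(f+1)-\prod_{i=1}^n\frac{m_i^{L_i}-1}{m_i-1}+1.$$
   Context: Setting (sliced parallel tensor network contraction). A tensor network is contracted in parallel by "slicing" $n$ of its closed indices: index $i$ has dimension $L_i$ and is shared by $m_i$ tensors (an "$m_i$-node index"), and the sliced indices are pairwise non-adjacent, i.e. no tensor carries two sliced indices. Fixing the value $s_i\in\{1,\dots,L_i\}$ of each sliced index turns each of the $m_i$ tensors attached to index $i$ into a sliced subtensor $A^{(i,j)}_{s_i}\in V_{i,j}$ ($j=1,\dots,m_i$), and contracting the rest of the network (all tensors not attached to sliced indices, together with all non-sliced indices) is a multilinear map $\Phi:\prod_{i=1}^n\prod_{j=1}^{m_i}V_{i,j}\to W$ between finite-dimensional vector spaces over an infinite field $\mathbb{F}$. The sliced partition for $(s_1,\dots,s_n)$ is $\sigma_{s_1\cdots s_n}=\Phi(A^{(1,1)}_{s_1},\dots,A^{(1,m_1)}_{s_1},\dots,A^{(n,1)}_{s_n},\dots,A^{(n,m_n)}_{s_n})$, and the desired output is $\sigma_{\mathrm{final}}=\sum_{s_1,\dots,s_n}\sigma_{s_1\cdots s_n}$; there are $N=\prod_i L_i$ sliced partitions. Computing model: a master distributes work to workers; each worker evaluates $\Phi$ once on one input from each $V_{i,j}$ (so it has the same computational cost as computing one sliced partition) and returns the result; up to $f$ workers may fail, and nothing is recovered from a failed worker. The $f$-resilient number of a scheme is the total number of workers required so that $\sigma_{\mathrm{final}}$ can be retrieved despite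 any $f$ worker failures. Naive replication (each of the $N$ sliced partitions computed by $f+1$ workers) has $f$-resilient number $N(f+1)$; the gain of a scheme is $N(f+1)$ minus its $f$-resilient number. *)

theory Defs
  imports "HOL-Analysis.Analysis"
begin

text \<open>Parameters of the coded sliced-contraction scheme.
  m i = number of tensors sharing sliced index i, L i = dimension of sliced index i.\<close>

definition Rc :: "nat \<Rightarrow> nat \<Rightarrow> nat" where
  "Rc mi Li = (mi ^ Li - 1) div (mi - 1)"

definition ec :: "nat \<Rightarrow> nat \<Rightarrow> nat" where
  "ec mi s = (mi ^ (s - 1) - 1) div (mi - 1)"

definition Dc :: "(nat \<Rightarrow> nat) \<Rightarrow> (nat \<Rightarrow> nat) \<Rightarrow> nat \<Rightarrow> nat" where
  "Dc m L i = (\<Prod>k\<in>{1..<i}. Rc (m k) (L k))"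

definition K0 :: "nat \<Rightarrow> (nat \<Rightarrow> nat) \<Rightarrow> (nat \<Rightarrow> nat) \<Rightarrow> nat" where
  "K0 n m L = (\<Prod>i\<in>{1..n}. Rc (m i) (L i))"

definition Nslices :: "nat \<Rightarrow> (nat \<Rightarrow> nat) \<Rightarrow> nat" where
  "Nslices n L = (\<Prod>i\<in>{1..n}. L i)"

definition positions :: "nat \<Rightarrow> (nat \<Rightarrow> nat) \<Rightarrow> (nat \<times> nat) set" where
  "positions n m = {(i, j). i \<in> {1..n} \<and> j \<in> {1..m i}}"

definition slice_tuples :: "nat \<Rightarrow> (nat \<Rightarrow> nat) \<Rightarrow> (nat \<Rightarrow> nat) set" where
  "slice_tuples n L = (\<Pi>\<^sub>E i\<in>{1..n}. {1..L i})"

definition multilinear_on ::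
  "'p set \<Rightarrow> (('p \<Rightarrow> 'a::field ^ 'd) \<Rightarrow> 'a ^ 'e) \<Rightarrow> bool" where
  "multilinear_on P Phi \<longleftrightarrow>
     (\<forall>a b. (\<forall>p\<in>P. a p = b p) \<longrightarrow> Phi a = Phi b) \<and>
     (\<forall>p\<in>P. \<forall>a u v. Phi (a(p := u + v)) = Phi (a(p := u)) + Phi (a(p := v))) \<and>
     (\<forall>p\<in>P. \<forall>a c u. Phi (a(p := c *s u)) = c *s Phi (a(p := u)))"

text \<open>Sliced partition sigma_{s_1...s_n}; A i j s is the slice A^{(i,j)}_s.\<close>
definition sigma ::
  "((nat \<times> nat \<Rightarrow> 'a::field ^ 'd) \<Rightarrow> 'a ^ 'e) \<Rightarrow> (nat \<Rightarrow> nat \<Rightarrow> nat \<Rightarrow> 'a ^ 'd)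
     \<Rightarrow> (nat \<Rightarrow> nat) \<Rightarrow> 'a ^ 'e" where
  "sigma Phi A s = Phi (\<lambda>(i, j). A i j (s i))"

definition sigma_final ::
  "nat \<Rightarrow> (nat \<Rightarrow> nat) \<Rightarrow> ((nat \<times> nat \<Rightarrow> 'a::field ^ 'd) \<Rightarrow> 'a ^ 'e)
     \<Rightarrow> (nat \<Rightarrow> nat \<Rightarrow> nat \<Rightarrow> 'a ^ 'd) \<Rightarrow> 'a ^ 'e" where
  "sigma_final n L Phi A = (\<Sum>s\<in>slice_tuples n L. sigma Phi A s)"

definition enc ::
  "(nat \<Rightarrow> nat) \<Rightarrow> (nat \<Rightarrow> nat) \<Rightarrow> (nat \<Rightarrow> nat \<Rightarrow> nat \<Rightarrow> 'a::field ^ 'd)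
     \<Rightarrow> nat \<Rightarrow> nat \<Rightarrow> 'a \<Rightarrow> 'a ^ 'd" where
  "enc m L A i j x = (\<Sum>s = 1..L i. x ^ (Dc m L i * ec (m i) s) *s A i j s)"

definition gfun ::
  "(nat \<Rightarrow> nat) \<Rightarrow> (nat \<Rightarrow> nat) \<Rightarrow> ((nat \<times> nat \<Rightarrow> 'a::field ^ 'd) \<Rightarrow> 'a ^ 'e)
     \<Rightarrow> (nat \<Rightarrow> nat \<Rightarrow> nat \<Rightarrow> 'a ^ 'd) \<Rightarrow> 'a \<Rightarrow> 'a ^ 'e" where
  "gfun m L Phi A x = Phi (\<lambda>(i, j). enc m L A i j x)"

definition expo :: "nat \<Rightarrow> (nat \<Rightarrow> nat) \<Rightarrow> (nat \<Rightarrow> nat) \<Rightarrow> (nat \<Rightarrow> nat) \<Rightarrow> nat" where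
  "expo n m L s = (\<Sum>i = 1..n. Dc m L i * m i * ec (m i) (s i))"

end

theory Submission
  imports Defs "HOL-Computational_Algebra.Polynomial"
begin

lemma ml_local:
  assumes "multilinear_on P Phi" "\<forall>p\<in>P. a p = b p"
  shows "Phi a = Phi b"
  using assms unfolding multilinear_on_def by blast

lemma ml_add:
  assumes "multilinear_on P Phi" "q \<in> P"
  shows "Phi (a(q := u + v)) = Phi (a(q := u)) + Phi (a(q := v))"
  using assms unfolding multilinear_on_def by blast

lemma ml_scale:
  assumes "multilinear_on P Phi" "q \<in> P"
  shows "Phi (a(q := c *s u)) = c *s Phi (a(q := u))"
  using assms unfolding multilinear_on_def by blast

lemma ml_sum:
  assumes "multilinear_on P Phi" "q \<in> P" "finite S"
  shows "Phi (a(q := (\<Sum>s\<in>S. v s))) = (\<Sum>s\<in>S. Phi (a(q := v s)))"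
  using assms(3)
proof (induction S rule: finite_induct)
  case empty
  have "Phi (a(q := 0)) = Phi (a(q := 0 *s 0))" by simp
  also have "\<dots> = 0 *s Phi (a(q := 0))" using ml_scale[OF assms(1,2)] by blast
  finally have "Phi (a(q := 0)) = 0" by simp
  then show ?case by (simp only: sum.empty)
next
  case (insert x F)
  have "Phi (a(q := (\<Sum>s\<in>insert x F. v s))) = Phi (a(q := v x + (\<Sum>s\<in>F. v s)))"
    using insert(1,2) by (simp only: sum.insert[OF insert(1,2)])
  also have "\<dots> = Phi (a(q := v x)) + Phi (a(q := (\<Sum>s\<in>F. v s)))"
    by (rule ml_add[OF assms(1,2)])
  also have "\<dots> = (\<Sum>s\<in>insert x F. Phi (a(q := v s)))"
    using insert.IH by (simp only: sum.insert[OF insert(1,2)])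
  finally show ?case .
qed

lemma ml_expand:
  assumes ml: "multilinear_on P Phi" and fin: "finite Q" and sub: "Q \<subseteq> P"
    and finS: "\<forall>p\<in>Q. finite (S p)"
  shows "Phi (\<lambda>p. if p \<in> Q then (\<Sum>s\<in>S p. c p s *s u p s) else a p) =
    (\<Sum>\<sigma>\<in>PiE Q S. (\<Prod>p\<in>Q. c p (\<sigma> p)) *s Phi (\<lambda>p. if p \<in> Q then u p (\<sigma> p) else a p))"
  using fin sub finS
proof (induction Q arbitrary: a rule: finite_induct)
  case empty
  then show ?case by simp
next
  case (insert q Q)
  have qP: "q \<in> P" using insert by auto
  define g where "g a' = (\<lambda>p. if p \<in> Q then (\<Sum>s\<in>S p. c p s *s u p s) else a' p)" for a'
  have e1: "(\<lambda>p. if p \<in> insert q Q then (\<Sum>s\<in>S p. c p s *s u p s) else a p)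
      = (g a)(q := (\<Sum>s\<in>S q. c q s *s u q s))"
    using insert(2) by (auto simp: g_def)
  have e2: "(g a)(q := w) = g (a(q := w))" for w
    using insert(2) by (auto simp: g_def)
  have finq: "finite (S q)" using insert by auto
  have "Phi ((g a)(q := (\<Sum>s\<in>S q. c q s *s u q s)))
      = (\<Sum>s\<in>S q. c q s *s Phi ((g a)(q := u q s)))"
    using ml_sum[OF ml qP finq] ml_scale[OF ml qP] by simp
  also have "\<dots> = (\<Sum>s\<in>S q. c q s *s (\<Sum>\<sigma>\<in>PiE Q S. (\<Prod>p\<in>Q. c p (\<sigma> p)) *s
        Phi (\<lambda>p. if p \<in> Q then u p (\<sigma> p) else (a(q := u q s)) p)))"
  proof (rule sum.cong[OF refl])
    fix s
    have "Phi (g a') = (\<Sum>\<sigma>\<in>PiE Q S. (\<Prod>p\<in>Q. c p (\<sigma> p)) *s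
        Phi (\<lambda>p. if p \<in> Q then u p (\<sigma> p) else a' p))" for a'
      unfolding g_def using insert.IH insert.prems by simp
    then show "c q s *s Phi ((g a)(q := u q s)) = c q s *s (\<Sum>\<sigma>\<in>PiE Q S. (\<Prod>p\<in>Q. c p (\<sigma> p)) *s
        Phi (\<lambda>p. if p \<in> Q then u p (\<sigma> p) else (a(q := u q s)) p))"
      by (simp only: e2)
  qed
  also have "\<dots> = (\<Sum>s\<in>S q. \<Sum>\<sigma>\<in>PiE Q S. (c q s * (\<Prod>p\<in>Q. c p (\<sigma> p))) *s
        Phi (\<lambda>p. if p \<in> Q then u p (\<sigma> p) else (a(q := u q s)) p))"
    by (simp add: vec.scale_sum_right vector_smult_assoc)
  also have "\<dots> = (\<Sum>(s,\<sigma>)\<in>S q \<times> PiE Q S. (c q s * (\<Prod>p\<in>Q. c p (\<sigma> p))) *s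
        Phi (\<lambda>p. if p \<in> Q then u p (\<sigma> p) else (a(q := u q s)) p))"
    by (rule sum.cartesian_product)
  also have "\<dots> = (\<Sum>\<tau>\<in>PiE (insert q Q) S. (\<Prod>p\<in>insert q Q. c p (\<tau> p)) *s
        Phi (\<lambda>p. if p \<in> insert q Q then u p (\<tau> p) else a p))"
  proof -
    have inj: "inj_on (\<lambda>(y, g). g(q := y)) (S q \<times> PiE Q S)"
    proof (rule inj_onI, clarify)
      fix y g y' g'
      assume g: "g \<in> PiE Q S" and g': "g' \<in> PiE Q S" and eq: "g(q := y) = g'(q := y')"
      have "y = y'" using fun_cong[OF eq, of q] by simp
      moreover have "g = g'"
      proof
        fix p show "g p = g' p"
        proof (cases "p = q")
          case True then show ?thesis using g g' insert(2) by (auto simp: PiE_def extensional_def)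
        next
          case False then show ?thesis using fun_cong[OF eq, of p] by simp
        qed
      qed
      ultimately show "y = y' \<and> g = g'" by simp
    qed
    show ?thesis
      unfolding PiE_insert_eq
      apply (subst sum.reindex[OF inj])
      apply (rule sum.cong[OF refl])
      apply clarify
      subgoal for y \<sigma>
      proof -
        assume \<sigma>: "\<sigma> \<in> PiE Q S"
        have p1: "(\<Prod>p\<in>insert q Q. c p ((\<sigma>(q := y)) p)) = c q y * (\<Prod>p\<in>Q. c p (\<sigma> p))"
          using insert(1,2) by (simp add: prod.insert) (rule disjI2, rule prod.cong, auto)
        have p2: "(\<lambda>p. if p \<in> insert q Q then u p ((\<sigma>(q := y)) p) else a p)
            = (\<lambda>p. if p \<in> Q then u p (\<sigma> p) else (a(q := u q y)) p)"
          using insert(2) by auto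
        show ?thesis by (simp only: o_apply prod.case p1 p2)
      qed
      done
  qed
  finally show ?case using e1 by simp
qed

definition G :: "nat \<Rightarrow> nat \<Rightarrow> nat" where "G m k = (\<Sum>i<k. m ^ i)"

lemma G_Suc0: "G m (Suc k) = G m k + m ^ k"
  by (simp add: G_def)

lemma G_Suc: "G m (Suc k) = m * G m k + 1"
proof (induction k)
  case 0 then show ?case by (simp add: G_def)
next
  case (Suc k)
  have "G m (Suc (Suc k)) = G m (Suc k) + m ^ Suc k" by (rule G_Suc0)
  also have "\<dots> = m * (G m k + m ^ k) + 1" using Suc by (simp add: algebra_simps)
  also have "\<dots> = m * G m (Suc k) + 1" by (simp add: G_Suc0)
  finally show ?case .
qed

lemma G_geo: "G (Suc m') k * m' + 1 = (Suc m') ^ k"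
proof (induction k)
  case 0 then show ?case by (simp add: G_def)
next
  case (Suc k)
  have "G (Suc m') (Suc k) * m' + 1 = Suc m' * (G (Suc m') k * m' + 1)"
    unfolding G_Suc by (simp add: algebra_simps)
  also have "\<dots> = Suc m' ^ Suc k" using Suc by simp
  finally show ?case .
qed

lemma G_div: "(m ^ k - 1) div (m - 1) = G m k" if m2: "m \<ge> 2"
proof -
  obtain m' where m0: "m = Suc m'" using m2 by (cases m) auto
  have m': "m = Suc m'" "m' \<ge> 1" using m0 m2 by auto
  have "m ^ k - 1 = G m k * m'" using G_geo[of m' k] m' by simp
  moreover have "m - 1 = m'" using m' by simp
  ultimately show ?thesis using m' by simp
qed

lemma Rc_G: "m \<ge> 2 \<Longrightarrow> Rc m L = G m L"
  unfolding Rc_def by (rule G_div)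

lemma ec_G: "m \<ge> 2 \<Longrightarrow> ec m s = G m (s - 1)"
  unfolding ec_def by (rule G_div)

lemma G_mono: "a \<le> b \<Longrightarrow> G m a \<le> G m b"
  unfolding G_def by (rule sum_mono2) auto

lemma G_strict: "m \<ge> 1 \<Longrightarrow> a < b \<Longrightarrow> G m a < G m b"
proof -
  assume m: "m \<ge> 1" and ab: "a < b"
  have "G m a \<le> m * G m a" using m by simp
  then have "G m a < m * G m a + 1" by linarith
  then have "G m a < G m (Suc a)" by (simp add: G_Suc)
  also have "\<dots> \<le> G m b" using ab by (intro G_mono) simp
  finally show ?thesis .
qed

lemma G_pos: "k \<ge> 1 \<Longrightarrow> G m k \<ge> 1"
  using G_mono[of 1 k m] by (simp add: G_def)

lemma block_G:
  fixes h :: "nat \<Rightarrow> nat" and J :: "nat set"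
  assumes m: "m \<ge> 2" and fin: "finite J" and cardJ: "card J = m"
    and sum: "(\<Sum>j\<in>J. G m (h j)) = m * G m h0"
  shows "\<forall>j\<in>J. h j = h0"
proof -
  have le: "\<forall>j\<in>J. h j \<le> h0"
  proof (rule ccontr)
    assume "\<not> (\<forall>j\<in>J. h j \<le> h0)"
    then obtain j where j: "j \<in> J" "h j > h0" by auto
    have "G m (h j) \<ge> G m (Suc h0)" using j by (intro G_mono) simp
    moreover have "G m (h j) \<le> (\<Sum>j\<in>J. G m (h j))"
      using j fin by (intro member_le_sum) auto
    ultimately show False using sum by (simp add: G_Suc)
  qed
  show ?thesis
  proof (rule ccontr)
    assume "\<not> (\<forall>j\<in>J. h j = h0)"
    then obtain j where j: "j \<in> J" "h j < h0" using le by fastforce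
    have ex: "\<exists>a\<in>J. G m (h a) < G m h0" using j m by (intro bexI[of _ j] G_strict) auto
    have "(\<Sum>j\<in>J. G m (h j)) < (\<Sum>j\<in>J. G m h0)"
      using fin le ex by (intro sum_strict_mono_ex1) (auto intro: G_mono)
    then show False using sum cardJ by simp
  qed
qed

lemma radix_bound:
  fixes R t :: "nat \<Rightarrow> nat"
  assumes "\<forall>i\<in>{1..n}. t i < R i"
  shows "(\<Sum>i=1..n. (\<Prod>k\<in>{1..<i}. R k) * t i) < (\<Prod>i\<in>{1..n}. R i)"
  using assms
proof (induction n)
  case 0 then show ?case by simp
next
  case (Suc n)
  define P where "P = (\<Prod>i\<in>{1..n}. R i)"
  have IH: "(\<Sum>i=1..n. (\<Prod>k\<in>{1..<i}. R k) * t i) < P" using Suc by (simp add: P_def)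
  have eq: "{1..<Suc n} = {1..n}" by auto
  have "Suc n \<in> {1..Suc n}" by simp
  then have "t (Suc n) < R (Suc n)" using Suc.prems by blast
  then have tl: "t (Suc n) + 1 \<le> R (Suc n)" by simp
  have "(\<Sum>i=1..Suc n. (\<Prod>k\<in>{1..<i}. R k) * t i) = (\<Sum>i=1..n. (\<Prod>k\<in>{1..<i}. R k) * t i) + P * t (Suc n)"
    unfolding sum.cl_ivl_Suc eq P_def by simp
  also have "\<dots> < P + P * t (Suc n)" using IH by simp
  also have "\<dots> = P * (t (Suc n) + 1)" by (simp add: algebra_simps)
  also have "\<dots> \<le> P * R (Suc n)" using tl by (rule mult_le_mono2)
  also have "\<dots> = (\<Prod>i\<in>{1..Suc n}. R i)" by (simp add: P_def prod.nat_ivl_Suc' mult.commute)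
  finally show ?case .
qed

lemma radix_uniq:
  fixes R t t' :: "nat \<Rightarrow> nat"
  assumes "\<forall>i\<in>{1..n}. t i < R i" "\<forall>i\<in>{1..n}. t' i < R i"
    and "(\<Sum>i=1..n. (\<Prod>k\<in>{1..<i}. R k) * t i) = (\<Sum>i=1..n. (\<Prod>k\<in>{1..<i}. R k) * t' i)"
  shows "\<forall>i\<in>{1..n}. t i = t' i"
  using assms
proof (induction n)
  case 0 then show ?case by simp
next
  case (Suc n)
  define P where "P = (\<Prod>i\<in>{1..n}. R i)"
  define A where "A = (\<Sum>i=1..n. (\<Prod>k\<in>{1..<i}. R k) * t i)"
  define A' where "A' = (\<Sum>i=1..n. (\<Prod>k\<in>{1..<i}. R k) * t' i)"
  have A: "A < P" unfolding A_def P_def using Suc.prems by (intro radix_bound) auto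
  have A': "A' < P" unfolding A'_def P_def using Suc.prems by (intro radix_bound) auto
  have eq: "{1..<Suc n} = {1..n}" by auto
  have sp: "(\<Sum>i=1..Suc n. (\<Prod>k\<in>{1..<i}. R k) * f i) = (\<Sum>i=1..n. (\<Prod>k\<in>{1..<i}. R k) * f i) + P * f (Suc n)" for f :: "nat \<Rightarrow> nat"
    unfolding sum.cl_ivl_Suc eq P_def by simp
  have "A + P * t (Suc n) = A' + P * t' (Suc n)"
    using Suc.prems(3) unfolding sp A_def A'_def .
  then have h: "(A + P * t (Suc n)) mod P = (A' + P * t' (Suc n)) mod P"
     "(A + P * t (Suc n)) div P = (A' + P * t' (Suc n)) div P" by simp_all
  have Ppos: "P > 0" using A by simp
  have e1: "A = A'" using h(1) A A' by simp
  have e2: "t (Suc n) = t' (Suc n)" using h(2) A A' Ppos by simp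
  have "\<forall>i\<in>{1..n}. t i = t' i" using Suc.IH Suc.prems e1 by (auto simp: A_def A'_def)
  then show ?case using e2 by (auto simp: le_Suc_eq)
qed

lemma coeff_uniq:
  fixes d d' :: "nat \<Rightarrow> 'a::field ^ 'e" and xs :: "nat \<Rightarrow> 'a"
  assumes inj: "inj_on xs T" and fin: "finite T" and card: "card T = K"
    and eq: "\<forall>k\<in>T. (\<Sum>j<K. xs k ^ j *s d j) = (\<Sum>j<K. xs k ^ j *s d' j)"
  shows "\<forall>j<K. d j = d' j"
proof (intro allI impI)
  fix j assume j: "j < K"
  show "d j = d' j"
  proof (rule vec_eq_iff[THEN iffD2], rule allI)
    fix e
    define p where "p = (\<Sum>i<K. monom ((d i - d' i) $ e) i)"
    have roots: "xs ` T \<subseteq> {x. poly p x = 0}"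
    proof clarify
      fix k assume k: "k \<in> T"
      have "(\<Sum>i<K. xs k ^ i *s d i) $ e = (\<Sum>i<K. xs k ^ i *s d' i) $ e" using eq k by simp
      then have h: "(\<Sum>i<K. xs k ^ i * d i $ e) = (\<Sum>i<K. xs k ^ i * d' i $ e)"
        by (simp add: sum_component)
      have "poly p (xs k) = (\<Sum>i<K. (d i $ e - d' i $ e) * xs k ^ i)"
        by (simp add: p_def poly_sum poly_monom)
      also have "\<dots> = (\<Sum>i<K. xs k ^ i * d i $ e) - (\<Sum>i<K. xs k ^ i * d' i $ e)"
        by (simp add: sum_subtractf algebra_simps)
      finally show "poly p (xs k) = 0" using h by simp
    qed
    have "p = 0"
    proof (rule ccontr)
      assume p0: "p \<noteq> 0"
      have "card (xs ` T) \<le> card {x. poly p x = 0}"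
        using roots poly_roots_finite[OF p0] by (rule card_mono[rotated])
      also have "\<dots> \<le> degree p" by (rule card_poly_roots_bound[OF p0])
      also have "\<dots> \<le> K - 1" unfolding p_def
        by (rule degree_sum_le) (auto intro: order.trans[OF degree_monom_le])
      finally have "K \<le> K - 1" using card_image[OF inj] card by simp
      then show False using j by simp
    qed
    then have "coeff p j = 0" by simp
    moreover have "coeff p j = (d j - d' j) $ e"
      using j by (simp add: p_def coeff_sum coeff_monom)
    ultimately show "d j $ e = d' j $ e" by simp
  qed
qed

lemma positions_Sigma: "positions n m = Sigma {1..n} (\<lambda>i. {1..m i})"
  by (auto simp: positions_def)

theorem theorem2:
  fixes n :: nat and m L :: "nat \<Rightarrow> nat"
  assumes inf: "infinite (UNIV :: 'a::field set)"
    and n_pos: "n \<ge> 1"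
    and m_ge: "\<forall>i\<in>{1..n}. m i \<ge> 2"
    and L_ge: "\<forall>i\<in>{1..n}. L i \<ge> 1"
  shows
    "(\<forall>(Phi :: (nat \<times> nat \<Rightarrow> 'a ^ 'd) \<Rightarrow> 'a ^ 'e) (A :: nat \<Rightarrow> nat \<Rightarrow> nat \<Rightarrow> 'a ^ 'd).
        multilinear_on (positions n m) Phi \<longrightarrow>
        (\<exists>c :: nat \<Rightarrow> 'a ^ 'e.
           (\<forall>x. gfun m L Phi A x = (\<Sum>k<K0 n m L. x ^ k *s c k)) \<and>
           (\<forall>s\<in>slice_tuples n L. c (expo n m L s) = sigma Phi A s)))
     \<and> inj_on (expo n m L) (slice_tuples n L)
     \<and> (\<forall>s\<in>slice_tuples n L. expo n m L s < K0 n m L)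
     \<and> (\<forall>(f::nat) (xs :: nat \<Rightarrow> 'a) T.
          inj_on xs {1..f + K0 n m L} \<longrightarrow> T \<subseteq> {1..f + K0 n m L} \<longrightarrow> card T = K0 n m L \<longrightarrow>
          (\<exists>dec :: (nat \<Rightarrow> 'a ^ 'e) \<Rightarrow> (nat \<Rightarrow> nat) \<Rightarrow> 'a ^ 'e.
             \<forall>(Phi :: (nat \<times> nat \<Rightarrow> 'a ^ 'd) \<Rightarrow> 'a ^ 'e) (A :: nat \<Rightarrow> nat \<Rightarrow> nat \<Rightarrow> 'a ^ 'd)
               (y :: nat \<Rightarrow> 'a ^ 'e).
               multilinear_on (positions n m) Phi \<longrightarrow>
               (\<forall>k\<in>T. y k = gfun m L Phi A (xs k)) \<longrightarrow>
               (\<forall>s\<in>slice_tuples n L. dec y s = sigma Phi A s) \<and>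
               (\<Sum>s\<in>slice_tuples n L. dec y s) = sigma_final n L Phi A))
     \<and> (\<forall>f::nat. int (Nslices n L * (f + 1)) - int (f + K0 n m L)
          = (int (Nslices n L) - 1) * int (f + 1) - int (K0 n m L) + 1)"
proof -
  define P where "P = positions n m"
  define S where "S = (\<lambda>p::nat\<times>nat. {1..L (fst p)})"
  define R where "R i = Rc (m i) (L i)" for i
  define Ex where "Ex \<sigma> = (\<Sum>i=1..n. Dc m L i * (\<Sum>j=1..m i. ec (m i) (\<sigma> (i, j))))"
    for \<sigma> :: "nat \<times> nat \<Rightarrow> nat"
  define ss where "ss s = (\<lambda>p. if p \<in> P then s (fst p) else undefined)" for s :: "nat \<Rightarrow> nat"
  have PSig: "P = Sigma {1..n} (\<lambda>i. {1..m i})" by (simp add: P_def positions_Sigma)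
  have finP: "finite P" by (simp add: PSig)
  have DcR: "Dc m L i = (\<Prod>k\<in>{1..<i}. R k)" for i by (simp add: Dc_def R_def)
  have K0R: "K0 n m L = (\<Prod>i\<in>{1..n}. R i)" by (simp add: K0_def R_def)
  have expoR: "expo n m L s = (\<Sum>i=1..n. (\<Prod>k\<in>{1..<i}. R k) * (m i * ec (m i) (s i)))" for s
    by (simp add: expo_def DcR mult.assoc)
  have ExR: "Ex \<sigma> = (\<Sum>i=1..n. (\<Prod>k\<in>{1..<i}. R k) * (\<Sum>j=1..m i. ec (m i) (\<sigma> (i, j))))" for \<sigma>
    by (simp add: Ex_def DcR)
  have ec_le: "ec (m i) x \<le> ec (m i) (L i)" if "i \<in> {1..n}" "x \<in> {1..L i}" for i x
    using that m_ge by (auto simp: ec_G intro!: G_mono)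
  have mec_less: "m i * ec (m i) (L i) < R i" if "i \<in> {1..n}" for i
  proof -
    have mi: "m i \<ge> 2" and Li: "L i \<ge> 1" using that m_ge L_ge by auto
    have "Suc (L i - 1) = L i" using Li by simp
    then have "R i = G (m i) (Suc (L i - 1))" using mi by (simp add: R_def Rc_G)
    also have "\<dots> = m i * ec (m i) (L i) + 1" using mi by (simp add: G_Suc ec_G)
    finally show ?thesis by simp
  qed
  have bnd: "(\<Sum>j=1..m i. ec (m i) (\<sigma> (i, j))) < R i"
    if "\<sigma> \<in> PiE P S" "i \<in> {1..n}" for \<sigma> i
  proof -
    have "(\<Sum>j=1..m i. ec (m i) (\<sigma> (i, j))) \<le> (\<Sum>j=1..m i. ec (m i) (L i))"
    proof (rule sum_mono)
      fix j assume "j \<in> {1..m i}"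
      then have "(i, j) \<in> P" using that(2) by (simp add: PSig)
      then have "\<sigma> (i, j) \<in> {1..L i}" using that(1) by (auto simp: S_def PiE_def Pi_def)
      then show "ec (m i) (\<sigma> (i, j)) \<le> ec (m i) (L i)" using ec_le that(2) by blast
    qed
    also have "\<dots> = m i * ec (m i) (L i)" by simp
    finally show ?thesis using mec_less[OF that(2)] by simp
  qed
  have bnd2: "m i * ec (m i) (s i) < R i" if "s \<in> slice_tuples n L" "i \<in> {1..n}" for s i
  proof -
    have "s i \<in> {1..L i}" using that by (auto simp: slice_tuples_def PiE_def Pi_def)
    then have "ec (m i) (s i) \<le> ec (m i) (L i)" using ec_le that(2) by blast
    then have "m i * ec (m i) (s i) \<le> m i * ec (m i) (L i)" by (rule mult_le_mono2)
    then show ?thesis using mec_less[OF that(2)] by linarith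
  qed
  have ExK: "Ex \<sigma> < K0 n m L" if "\<sigma> \<in> PiE P S" for \<sigma>
    unfolding ExR K0R by (rule radix_bound) (use bnd that in blast)
  have expoK: "\<forall>s\<in>slice_tuples n L. expo n m L s < K0 n m L"
    unfolding expoR K0R using bnd2 by (intro ballI radix_bound) blast
  have ss_in: "ss s \<in> PiE P S" if "s \<in> slice_tuples n L" for s
    using that by (auto simp: ss_def S_def slice_tuples_def PiE_def Pi_def PSig extensional_def)
  have ss_Ex: "Ex (ss s) = expo n m L s" if "s \<in> slice_tuples n L" for s
    unfolding Ex_def expo_def
    by (rule sum.cong[OF refl]) (simp add: ss_def PSig mult.assoc)
  have uniq: "\<sigma> = ss s" if s: "s \<in> slice_tuples n L" and \<sigma>: "\<sigma> \<in> PiE P S"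
    and eq: "Ex \<sigma> = expo n m L s" for s \<sigma>
  proof -
    have tt: "\<forall>i\<in>{1..n}. (\<Sum>j=1..m i. ec (m i) (\<sigma> (i, j))) = m i * ec (m i) (s i)"
      using eq unfolding ExR expoR
      by (intro radix_uniq[where R=R]) (use bnd[OF \<sigma>] bnd2[OF s] in auto)
    show ?thesis
    proof (rule ext)
      fix p
      show "\<sigma> p = ss s p"
      proof (cases "p \<in> P")
        case False
        have "\<sigma> p = undefined" by (rule PiE_arb[OF \<sigma> False])
        then show ?thesis using False by (simp add: ss_def)
      next
        case True
        obtain i j where p: "p = (i, j)" by (cases p)
        have i: "i \<in> {1..n}" and j: "j \<in> {1..m i}" using True unfolding p PSig by auto
        have mi: "m i \<ge> 2" using m_ge i by blast
        have mem: "\<sigma> (i, j') \<in> {1..L i}" if "j' \<in> {1..m i}" for j'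
        proof -
          have "(i, j') \<in> P" using that i unfolding PSig by simp
          then have "\<sigma> (i, j') \<in> S (i, j')" by (rule PiE_mem[OF \<sigma>])
          then show ?thesis by (simp add: S_def)
        qed
        have si: "s i \<in> {1..L i}" using PiE_mem[OF s[unfolded slice_tuples_def] i] .
        have ecG: "\<And>x. ec (m i) x = G (m i) (x - 1)" using mi by (rule ec_G)
        have "(\<Sum>j=1..m i. ec (m i) (\<sigma> (i, j))) = m i * ec (m i) (s i)" using tt i by blast
        then have hs: "(\<Sum>j\<in>{1..m i}. G (m i) (\<sigma> (i, j) - 1)) = m i * G (m i) (s i - 1)"
          by (simp only: ecG)
        have "\<forall>j\<in>{1..m i}. \<sigma> (i, j) - 1 = s i - 1"
          by (rule block_G[OF mi finite_atLeastAtMost _ hs]) simp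
        then have "\<sigma> (i, j) - 1 = s i - 1" using j by blast
        then have "\<sigma> (i, j) = s i" using mem[OF j] si by (simp only: atLeastAtMost_iff) arith
        then show ?thesis using True p by (simp add: ss_def)
      qed
    qed
  qed
  have injE: "inj_on (expo n m L) (slice_tuples n L)"
  proof (rule inj_onI)
    fix s s' assume s: "s \<in> slice_tuples n L" and s': "s' \<in> slice_tuples n L"
      and eq: "expo n m L s = expo n m L s'"
    have tt: "\<forall>i\<in>{1..n}. m i * ec (m i) (s i) = m i * ec (m i) (s' i)"
      using eq unfolding expoR
      by (intro radix_uniq[where R=R]) (use bnd2[OF s] bnd2[OF s'] in auto)
    show "s = s'"
    proof (rule ext)
      fix i
      show "s i = s' i"
      proof (cases "i \<in> {1..n}")
        case False
        have "s i = undefined" "s' i = undefined"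
          using PiE_arb[OF s[unfolded slice_tuples_def] False] PiE_arb[OF s'[unfolded slice_tuples_def] False] by auto
        then show ?thesis by simp
      next
        case True
        have mi: "m i \<ge> 2" using m_ge True by blast
        have si: "s i \<in> {1..L i}" "s' i \<in> {1..L i}"
          using s s' True by (auto simp: slice_tuples_def PiE_def Pi_def)
        have "m i * ec (m i) (s i) = m i * ec (m i) (s' i)" using tt True by blast
        then have "ec (m i) (s i) = ec (m i) (s' i)" using mi by simp
        then have "G (m i) (s i - 1) = G (m i) (s' i - 1)" using mi by (simp only: ec_G)
        moreover have m1: "m i \<ge> 1" using mi by simp
        ultimately have "s i - 1 = s' i - 1"
          using G_strict[OF m1, of "s i - 1" "s' i - 1"] G_strict[OF m1, of "s' i - 1" "s i - 1"]
          by (metis less_irrefl linorder_neqE_nat)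
        then show ?thesis using si by (simp only: atLeastAtMost_iff) arith
      qed
    qed
  qed
  have part1: "\<forall>(Phi :: (nat \<times> nat \<Rightarrow> 'a ^ 'd) \<Rightarrow> 'a ^ 'e) (A :: nat \<Rightarrow> nat \<Rightarrow> nat \<Rightarrow> 'a ^ 'd).
        multilinear_on (positions n m) Phi \<longrightarrow>
        (\<exists>c :: nat \<Rightarrow> 'a ^ 'e.
           (\<forall>x. gfun m L Phi A x = (\<Sum>k<K0 n m L. x ^ k *s c k)) \<and>
           (\<forall>s\<in>slice_tuples n L. c (expo n m L s) = sigma Phi A s))"
  proof (intro allI impI)
    fix Phi :: "(nat \<times> nat \<Rightarrow> 'a ^ 'd) \<Rightarrow> 'a ^ 'e" and A :: "nat \<Rightarrow> nat \<Rightarrow> nat \<Rightarrow> 'a ^ 'd"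
    assume ml0: "multilinear_on (positions n m) Phi"
    then have ml: "multilinear_on P Phi" by (simp add: P_def)
    define Psi where "Psi \<sigma> = Phi (\<lambda>p. if p \<in> P then A (fst p) (snd p) (\<sigma> p) else undefined)"
      for \<sigma> :: "nat \<times> nat \<Rightarrow> nat"
    define c where "c k = (\<Sum>\<sigma>\<in>{\<sigma>\<in>PiE P S. Ex \<sigma> = k}. Psi \<sigma>)" for k
    have finPi: "finite (PiE P S)" using finP by (intro finite_PiE) (auto simp: S_def)
    have g: "gfun m L Phi A x = (\<Sum>\<sigma>\<in>PiE P S. x ^ Ex \<sigma> *s Psi \<sigma>)" for x
    proof -
      have "gfun m L Phi A x = Phi (\<lambda>p. if p \<in> P then (\<Sum>s\<in>S p.
              x ^ (Dc m L (fst p) * ec (m (fst p)) s) *s A (fst p) (snd p) s) else undefined)"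
        unfolding gfun_def by (rule ml_local[OF ml]) (auto simp: enc_def S_def)
      also have "\<dots> = (\<Sum>\<sigma>\<in>PiE P S. (\<Prod>p\<in>P. x ^ (Dc m L (fst p) * ec (m (fst p)) (\<sigma> p))) *s Psi \<sigma>)"
        unfolding Psi_def
        by (rule ml_expand[OF ml finP subset_refl]) (auto simp: S_def)
      also have "\<dots> = (\<Sum>\<sigma>\<in>PiE P S. x ^ Ex \<sigma> *s Psi \<sigma>)"
      proof (rule sum.cong[OF refl])
        fix \<sigma>
        have "Ex \<sigma> = (\<Sum>i=1..n. \<Sum>j=1..m i. Dc m L i * ec (m i) (\<sigma> (i,j)))"
          unfolding Ex_def by (simp add: sum_distrib_left)
        also have "\<dots> = (\<Sum>(i,j)\<in>Sigma {1..n} (\<lambda>i. {1..m i}). Dc m L i * ec (m i) (\<sigma> (i,j)))"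
          by (rule sum.Sigma) auto
        also have "\<dots> = (\<Sum>p\<in>P. Dc m L (fst p) * ec (m (fst p)) (\<sigma> p))"
          unfolding PSig by (rule sum.cong) auto
        finally have "(\<Sum>p\<in>P. Dc m L (fst p) * ec (m (fst p)) (\<sigma> p)) = Ex \<sigma>" by simp
        then show "(\<Prod>p\<in>P. x ^ (Dc m L (fst p) * ec (m (fst p)) (\<sigma> p))) *s Psi \<sigma> = x ^ Ex \<sigma> *s Psi \<sigma>"
          by (simp add: power_sum[symmetric])
      qed
      finally show ?thesis .
    qed
    have g2: "gfun m L Phi A x = (\<Sum>k<K0 n m L. x ^ k *s c k)" for x
    proof -
      have "(\<Sum>k<K0 n m L. x ^ k *s c k) = (\<Sum>k<K0 n m L. \<Sum>\<sigma>\<in>PiE P S. if Ex \<sigma> = k then x ^ Ex \<sigma> *s Psi \<sigma> else 0)"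
        unfolding c_def by (simp add: sum.inter_filter[OF finPi] vec.scale_sum_right if_distrib cong: if_cong)
      also have "\<dots> = (\<Sum>\<sigma>\<in>PiE P S. \<Sum>k<K0 n m L. if Ex \<sigma> = k then x ^ Ex \<sigma> *s Psi \<sigma> else 0)"
        by (rule sum.swap)
      also have "\<dots> = (\<Sum>\<sigma>\<in>PiE P S. x ^ Ex \<sigma> *s Psi \<sigma>)"
        using ExK by (intro sum.cong[OF refl]) (simp add: sum.delta)
      finally show ?thesis using g by simp
    qed
    have coef: "c (expo n m L s) = sigma Phi A s" if s: "s \<in> slice_tuples n L" for s
    proof -
      have "{\<sigma>\<in>PiE P S. Ex \<sigma> = expo n m L s} = {ss s}"
      proof
        show "{\<sigma>\<in>PiE P S. Ex \<sigma> = expo n m L s} \<subseteq> {ss s}"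
        proof
          fix \<sigma> assume "\<sigma> \<in> {\<sigma>\<in>PiE P S. Ex \<sigma> = expo n m L s}"
          then have "\<sigma> \<in> PiE P S" "Ex \<sigma> = expo n m L s" by blast+
          then have "\<sigma> = ss s" by (rule uniq[OF s])
          then show "\<sigma> \<in> {ss s}" by blast
        qed
        show "{ss s} \<subseteq> {\<sigma>\<in>PiE P S. Ex \<sigma> = expo n m L s}"
          using ss_in[OF s] ss_Ex[OF s] by blast
      qed
      then have "c (expo n m L s) = Psi (ss s)" by (simp add: c_def)
      also have "\<dots> = sigma Phi A s"
        unfolding Psi_def sigma_def by (rule ml_local[OF ml]) (auto simp: ss_def)
      finally show ?thesis .
    qed
    show "\<exists>c :: nat \<Rightarrow> 'a ^ 'e.
           (\<forall>x. gfun m L Phi A x = (\<Sum>k<K0 n m L. x ^ k *s c k)) \<and>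
           (\<forall>s\<in>slice_tuples n L. c (expo n m L s) = sigma Phi A s)"
      using g2 coef by blast
  qed
  have part2: "\<forall>(f::nat) (xs :: nat \<Rightarrow> 'a) T.
          inj_on xs {1..f + K0 n m L} \<longrightarrow> T \<subseteq> {1..f + K0 n m L} \<longrightarrow> card T = K0 n m L \<longrightarrow>
          (\<exists>dec :: (nat \<Rightarrow> 'a ^ 'e) \<Rightarrow> (nat \<Rightarrow> nat) \<Rightarrow> 'a ^ 'e.
             \<forall>(Phi :: (nat \<times> nat \<Rightarrow> 'a ^ 'd) \<Rightarrow> 'a ^ 'e) (A :: nat \<Rightarrow> nat \<Rightarrow> nat \<Rightarrow> 'a ^ 'd)
               (y :: nat \<Rightarrow> 'a ^ 'e).
               multilinear_on (positions n m) Phi \<longrightarrow>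
               (\<forall>k\<in>T. y k = gfun m L Phi A (xs k)) \<longrightarrow>
               (\<forall>s\<in>slice_tuples n L. dec y s = sigma Phi A s) \<and>
               (\<Sum>s\<in>slice_tuples n L. dec y s) = sigma_final n L Phi A)"
  proof (intro allI impI)
    fix f :: nat and xs :: "nat \<Rightarrow> 'a" and T :: "nat set"
    assume injx: "inj_on xs {1..f + K0 n m L}" and TS: "T \<subseteq> {1..f + K0 n m L}"
      and cT: "card T = K0 n m L"
    have injT: "inj_on xs T" using injx TS by (rule inj_on_subset)
    have finT: "finite T" using TS finite_subset by blast
    define dec where "dec y s = (SOME cf. \<forall>k\<in>T. y k = (\<Sum>j<K0 n m L. xs k ^ j *s cf j)) (expo n m L s)"
      for y :: "nat \<Rightarrow> 'a ^ 'e" and s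
    show "\<exists>dec :: (nat \<Rightarrow> 'a ^ 'e) \<Rightarrow> (nat \<Rightarrow> nat) \<Rightarrow> 'a ^ 'e.
             \<forall>(Phi :: (nat \<times> nat \<Rightarrow> 'a ^ 'd) \<Rightarrow> 'a ^ 'e) (A :: nat \<Rightarrow> nat \<Rightarrow> nat \<Rightarrow> 'a ^ 'd)
               (y :: nat \<Rightarrow> 'a ^ 'e).
               multilinear_on (positions n m) Phi \<longrightarrow>
               (\<forall>k\<in>T. y k = gfun m L Phi A (xs k)) \<longrightarrow>
               (\<forall>s\<in>slice_tuples n L. dec y s = sigma Phi A s) \<and>
               (\<Sum>s\<in>slice_tuples n L. dec y s) = sigma_final n L Phi A"
    proof (rule exI[of _ dec], intro allI impI)
      fix Phi :: "(nat \<times> nat \<Rightarrow> 'a ^ 'd) \<Rightarrow> 'a ^ 'e" and A :: "nat \<Rightarrow> nat \<Rightarrow> nat \<Rightarrow> 'a ^ 'd"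
        and y :: "nat \<Rightarrow> 'a ^ 'e"
      assume ml: "multilinear_on (positions n m) Phi" and hy: "\<forall>k\<in>T. y k = gfun m L Phi A (xs k)"
      obtain c :: "nat \<Rightarrow> 'a ^ 'e" where c1: "\<forall>x. gfun m L Phi A x = (\<Sum>k<K0 n m L. x ^ k *s c k)"
        and c2: "\<forall>s\<in>slice_tuples n L. c (expo n m L s) = sigma Phi A s"
        using part1 ml by blast
      define cf where "cf = (SOME cf. \<forall>k\<in>T. y k = (\<Sum>j<K0 n m L. xs k ^ j *s cf j))"
      have hc: "\<forall>k\<in>T. y k = (\<Sum>j<K0 n m L. xs k ^ j *s c j)" using hy c1 by simp
      then have hcf: "\<forall>k\<in>T. y k = (\<Sum>j<K0 n m L. xs k ^ j *s cf j)"
        unfolding cf_def by (rule someI[of "\<lambda>cf. \<forall>k\<in>T. y k = (\<Sum>j<K0 n m L. xs k ^ j *s cf j)" c])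
      have same: "\<forall>j<K0 n m L. cf j = c j"
        using hc hcf by (intro coeff_uniq[OF injT finT cT]) simp
      have d: "\<forall>s\<in>slice_tuples n L. dec y s = sigma Phi A s"
      proof
        fix s assume s: "s \<in> slice_tuples n L"
        have "dec y s = cf (expo n m L s)" by (simp add: dec_def cf_def)
        also have "\<dots> = c (expo n m L s)" using same expoK s by blast
        also have "\<dots> = sigma Phi A s" using c2 s by blast
        finally show "dec y s = sigma Phi A s" .
      qed
      show "(\<forall>s\<in>slice_tuples n L. dec y s = sigma Phi A s) \<and>
               (\<Sum>s\<in>slice_tuples n L. dec y s) = sigma_final n L Phi A"
        using d by (simp add: sigma_final_def)
    qed
  qed
  have part3: "\<forall>f::nat. int (Nslices n L * (f + 1)) - int (f + K0 n m L)
          = (int (Nslices n L) - 1) * int (f + 1) - int (K0 n m L) + 1"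
    by (simp add: algebra_simps)
  show ?thesis using part1 injE expoK part2 part3 by blast
qed

end
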